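(* Let $f(t)=1+\sum_{i=1}^{d}f_{i-1}t^{i}$ be a polynomial with positive integer coefficients $f_0,\dots,f_{d-1}$, all of whose roots are real. Then $(1,f_0,\dots,f_{d-1})$ is the $h$-vector of a Cohen–Macaulay simplicial complex; equivalently, $\kappa_{i+1}(f_i)\le f_{i-1}$ for all $0\le i\le d-1$ (with $f_{-1}=1$).
   Context: Given positive integers $m$ and $i$, $m$ has a unique $i$-th binomial expansion $m=\binom{a_i}{i}+\binom{a_{i-1}}{i-1}+\cdots+\binom{a_j}{j}$ with $a_i>a_{i-1}>\cdots>a_j\ge j\ge1$. Define $\kappa_i(m)=\binom{a_i-1}{i-1}+\binom{a_{i-1}-1}{i-2}+\cdots+\binom{a_j-1}{j-1}$. For a simplicial complex $\Delta$ of dimension $d-1$ with $f$-vector $(f_{-1},\dots,f_{d-1})$ ($f_i$ = number of $i$-dimensional faces, $f_{-1}=1$), the $h$-polynomial $\sum_{i=0}^{d} h_i t^i$ is defined by $\sum h_it^i=(1-t)^{d}\sum_{i=0}^{d}f_{i-1}(t/(1-t))^{i}$, and $(h_0,\dots,h_d)$ is its $h$-vector. By Macaulay's theorem, a vector $(1,f_0,\dots,f_{d-1})$ of positive integers is the $h$-vector of a Cohen–Macaulay simplicial complex iff $\kappa_{i+1}(f_i)\le f_{i-1}$ for $0\le i\le d-1$. *)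

theory Defs
  imports "HOL-Computational_Algebra.Polynomial" Complex_Main
begin

text \<open>A list as = [a_i, a_(i-1), ..., a_j] is the i-th binomial expansion of m, where
  j = i + 1 - length as; the entry at position k corresponds to binomial (as!k choose (i-k)).\<close>
definition is_binom_expansion :: "nat \<Rightarrow> nat \<Rightarrow> nat list \<Rightarrow> bool" where
  "is_binom_expansion i m as \<longleftrightarrow>
     as \<noteq> [] \<and> length as \<le> i \<and>
     sorted_wrt (>) as \<and>
     last as \<ge> i + 1 - length as \<and>
     m = (\<Sum>k<length as. (as ! k) choose (i - k))"

definition kappa :: "nat \<Rightarrow> nat \<Rightarrow> nat" where
  "kappa i m = (let as = (THE as. is_binom_expansion i m as)
                in \<Sum>k<length as. (as ! k - 1) choose (i - k - 1))"

definition fpoly :: "nat \<Rightarrow> (nat \<Rightarrow> nat) \<Rightarrow> real poly" where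
  "fpoly d f = 1 + (\<Sum>i\<in>{1..d}. monom (real (f (i - 1))) i)"

end

theory Submission
  imports Defs "HOL-Computational_Algebra.Fundamental_Theorem_Algebra"
begin

fun bsum :: "nat \<Rightarrow> nat list \<Rightarrow> nat" where
  "bsum i [] = 0"
| "bsum i (a#as) = (a choose i) + bsum (i-1) as"

fun ksum :: "nat \<Rightarrow> nat list \<Rightarrow> nat" where
  "ksum i [] = 0"
| "ksum i (a#as) = ((a-1) choose (i-1)) + ksum (i-1) as"

fun vld :: "nat \<Rightarrow> nat list \<Rightarrow> bool" where
  "vld i [] = True"
| "vld i (a#as) = (1 \<le> i \<and> i \<le> a \<and> (\<forall>b\<in>set as. b < a) \<and> vld (i-1) as)"

lemma bsum_eq: "(\<Sum>k<length as. (as!k) choose (i-k)) = bsum i as"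
proof (induction as arbitrary: i)
  case Nil
  then show ?case by simp
next
  case (Cons a as)
  show ?case using Cons.IH[of "i-1"] by (simp add: sum.lessThan_Suc_shift del: sum.lessThan_Suc)
qed

lemma ksum_eq: "(\<Sum>k<length as. (as!k - 1) choose (i-k-1)) = ksum i as"
proof (induction as arbitrary: i)
  case Nil
  then show ?case by simp
next
  case (Cons a as)
  show ?case using Cons.IH[of "i-1"] by (simp add: sum.lessThan_Suc_shift del: sum.lessThan_Suc)
qed

lemma vld_ge: "vld i (a#as) \<Longrightarrow> i \<le> a"
  by simp

lemma vld_iff:
  "as \<noteq> [] \<Longrightarrow> vld i as \<longleftrightarrow> (length as \<le> i \<and> sorted_wrt (>) as \<and> last as \<ge> i + 1 - length as)"
proof (induction as arbitrary: i)
  case Nil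
  then show ?case by simp
next
  case (Cons a as)
  show ?case
  proof (cases "as = []")
    case True
    then show ?thesis by simp
  next
    case False
    then obtain b bs where b: "as = b # bs" by (cases as) auto
    have IH: "vld (i-1) as \<longleftrightarrow> (length as \<le> i-1 \<and> sorted_wrt (>) as \<and> last as \<ge> i - 1 + 1 - length as)"
      using Cons.IH False by blast
    have lasteq: "last (a#as) = last as" using False by simp
    have sw: "sorted_wrt (>) (a#as) \<longleftrightarrow> (\<forall>x\<in>set as. x < a) \<and> sorted_wrt (>) as" by simp
    show ?thesis
    proof
      assume L: "vld i (a#as)"
      then have i1: "1 \<le> i" and lt: "\<forall>x\<in>set as. x < a" and v: "vld (i-1) as" by auto
      from v IH have h: "length as \<le> i-1" "sorted_wrt (>) as" "last as \<ge> i - 1 + 1 - length as" by auto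
      have "length (a#as) \<le> i" using h(1) i1 by simp
      moreover have "sorted_wrt (>) (a#as)" using sw lt h(2) by blast
      moreover have "last (a#as) \<ge> i + 1 - length (a#as)" using lasteq h(3) i1 by simp
      ultimately show "length (a#as) \<le> i \<and> sorted_wrt (>) (a#as) \<and> last (a#as) \<ge> i + 1 - length (a#as)"
        by blast
    next
      assume R: "length (a#as) \<le> i \<and> sorted_wrt (>) (a#as) \<and> last (a#as) \<ge> i + 1 - length (a#as)"
      then have r1: "Suc (length as) \<le> i" and r2: "sorted_wrt (>) (a#as)" and r3: "last as \<ge> i + 1 - Suc (length as)"
        using lasteq by auto
      have i1: "1 \<le> i" using r1 by simp
      have lt: "\<forall>x\<in>set as. x < a" and s2: "sorted_wrt (>) as" using r2 sw by blast+
      have "length as \<le> i - 1" using r1 by simp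
      moreover have "last as \<ge> i - 1 + 1 - length as" using r3 i1 by simp
      ultimately have v: "vld (i-1) as" using IH s2 by blast
      then have "i - 1 \<le> b" using b by simp
      moreover have "b < a" using lt b by simp
      ultimately have "i \<le> a" by simp
      then show "vld i (a#as)" using i1 lt v by simp
    qed
  qed
qed

lemma is_exp_iff:
  "is_binom_expansion i m as \<longleftrightarrow> as \<noteq> [] \<and> vld i as \<and> m = bsum i as"
  unfolding is_binom_expansion_def using vld_iff bsum_eq by metis

lemma bsum_pos: "vld i (a#as) \<Longrightarrow> 1 \<le> bsum i (a#as)"
proof -
  assume "vld i (a#as)"
  then have "i \<le> a" by simp
  then have "a choose i \<ge> 1" by (simp add: Suc_leI)
  then show ?thesis by simp
qed

lemma bsum_upper: "vld i (a#as) \<Longrightarrow> bsum i (a#as) < Suc a choose i"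
proof (induction as arbitrary: i a)
  case Nil
  then obtain i' where i': "i = Suc i'" by (cases i) auto
  have "i' \<le> a" using Nil i' by simp
  then have "a choose i' > 0" by simp
  then show ?case using i' by simp
next
  case (Cons b bs)
  then obtain i' where i': "i = Suc i'" by (cases i) auto
  have v: "vld i' (b#bs)" and ba: "b < a" using Cons.prems i' by auto
  have IH: "bsum i' (b#bs) < Suc b choose i'" using Cons.IH v by blast
  have "Suc b choose i' \<le> a choose i'" using ba by (intro binomial_right_mono) simp
  then have "bsum i (a#b#bs) < (a choose i) + (a choose i')" using IH i' by simp
  then show ?case using i' by simp
qed

lemma vld_unique: "vld i as \<Longrightarrow> vld i bs \<Longrightarrow> bsum i as = bsum i bs \<Longrightarrow> as = bs"
proof (induction as arbitrary: i bs)
  case Nil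
  then show ?case
  proof (cases bs)
    case (Cons b bs')
    then show ?thesis using Nil bsum_pos[of i b bs'] by simp
  qed simp
next
  case (Cons a as)
  show ?case
  proof (cases bs)
    case Nil
    then show ?thesis using Cons.prems bsum_pos[of i a as] by simp
  next
    case (Cons b bs')
    have va: "vld i (a#as)" and vb: "vld i (b#bs')" using Cons.prems \<open>bs = b#bs'\<close> by auto
    have eq: "bsum i (a#as) = bsum i (b#bs')" using Cons.prems \<open>bs = b#bs'\<close> by simp
    have "a = b"
    proof (rule ccontr)
      assume "a \<noteq> b"
      then consider "a < b" | "b < a" by linarith
      then show False
      proof cases
        case 1
        have "bsum i (a#as) < Suc a choose i" using bsum_upper va .
        also have "\<dots> \<le> b choose i" using 1 by (intro binomial_right_mono) simp
        also have "\<dots> \<le> bsum i (b#bs')" by simp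
        finally show False using eq by simp
      next
        case 2
        have "bsum i (b#bs') < Suc b choose i" using bsum_upper vb .
        also have "\<dots> \<le> a choose i" using 2 by (intro binomial_right_mono) simp
        also have "\<dots> \<le> bsum i (a#as)" by simp
        finally show False using eq by simp
      qed
    qed
    then have "as = bs'" using Cons.IH[of "i-1" bs'] va vb eq by simp
    then show ?thesis using \<open>a = b\<close> \<open>bs = b#bs'\<close> by simp
  qed
qed

lemma exists_vld: "m < A choose i \<Longrightarrow> \<exists>as. vld i as \<and> bsum i as = m \<and> (\<forall>x\<in>set as. x < A)"
proof (induction i arbitrary: A m)
  case 0
  then have "m = 0" by simp
  then show ?case by (intro exI[of _ "[]"]) simp
next
  case (Suc i)
  show ?case
  proof (cases "m = 0")
    case True
    then show ?thesis by (intro exI[of _ "[]"]) simp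
  next
    case False
    define S where "S = {x. x < A \<and> x choose Suc i \<le> m}"
    have fin: "finite S" unfolding S_def by simp
    have "A choose Suc i \<ge> 2" using Suc.prems False by simp
    then have "Suc i \<le> A" by (metis binomial_eq_0 not_le not_numeral_le_zero)
    moreover have "A \<noteq> Suc i" using \<open>A choose Suc i \<ge> 2\<close> by auto
    ultimately have "Suc i < A" by simp
    then have inS: "Suc i \<in> S" unfolding S_def using False by simp
    define a where "a = Max S"
    have aS: "a \<in> S" unfolding a_def using fin inS by (intro Max_in) auto
    have ia: "Suc i \<le> a" unfolding a_def using fin inS by (intro Max_ge) auto
    have aA: "a < A" and ca: "a choose Suc i \<le> m" using aS unfolding S_def by auto
    have upper: "m < Suc a choose Suc i"
    proof (cases "Suc a < A")
      case True
      have "Suc a \<notin> S"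
      proof
        assume "Suc a \<in> S"
        then have "Suc a \<le> a" unfolding a_def using fin by (intro Max_ge) auto
        then show False by simp
      qed
      then show ?thesis using True unfolding S_def by auto
    next
      case False
      then have "Suc a = A" using aA by simp
      then show ?thesis using Suc.prems by simp
    qed
    then have "m - (a choose Suc i) < a choose i" using ca by simp
    then obtain as where as: "vld i as" "bsum i as = m - (a choose Suc i)" "\<forall>x\<in>set as. x < a"
      using Suc.IH by blast
    show ?thesis
      using as ia aA ca by (intro exI[of _ "a#as"]) auto
  qed
qed

lemma choose_big: "1 \<le> i \<Longrightarrow> m < (m + i) choose i"
proof (induction i)
  case 0
  then show ?case by simp
next
  case (Suc i)
  show ?case
  proof (cases "i = 0")
    case True
    then show ?thesis by simp
  next
    case False
    then have "m < (m + i) choose i" using Suc.IH by simp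
    then show ?thesis by simp
  qed
qed

lemma exists_exp: "1 \<le> i \<Longrightarrow> 1 \<le> m \<Longrightarrow> \<exists>as. as \<noteq> [] \<and> vld i as \<and> bsum i as = m"
proof -
  assume i: "1 \<le> i" and m: "1 \<le> m"
  obtain as where "vld i as" "bsum i as = m" using exists_vld[OF choose_big[OF i, of m]] by blast
  moreover have "as \<noteq> []" using calculation m by auto
  ultimately show ?thesis by blast
qed

lemma kappa_eq:
  assumes "vld i as" "as \<noteq> []"
  shows "kappa i (bsum i as) = ksum i as"
proof -
  have "(THE bs. is_binom_expansion i (bsum i as) bs) = as"
  proof (rule the_equality)
    show "is_binom_expansion i (bsum i as) as" using assms is_exp_iff by simp
  next
    fix bs assume "is_binom_expansion i (bsum i as) bs"
    then have "vld i bs" "bsum i bs = bsum i as" using is_exp_iff by auto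
    then show "bs = as" using vld_unique assms by metis
  qed
  then show ?thesis unfolding kappa_def Let_def using ksum_eq by simp
qed

lemma ksum_top: "vld i (a#as) \<Longrightarrow> ksum i (a#as) \<le> a choose (i-1)"
proof (induction as arbitrary: i a)
  case Nil
  then show ?case by (simp add: binomial_right_mono)
next
  case (Cons b bs)
  have v: "vld (i-1) (b#bs)" and ba: "b < a" and i2: "2 \<le> i" and ia: "i \<le> a" using Cons.prems by auto
  obtain i' where i': "i = Suc (Suc i')" using i2 by (metis add_2_eq_Suc le_Suc_ex)
  obtain a' where a': "a = Suc a'" using ia i' by (cases a) auto
  have IH: "ksum (Suc i') (b#bs) \<le> b choose i'" using Cons.IH[of "Suc i'" b] v i' by simp
  have "b choose i' \<le> a' choose i'" using ba a' by (intro binomial_right_mono) simp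
  then have "ksum i (a#b#bs) \<le> (a' choose (Suc i')) + (a' choose i')" using IH i' a' by simp
  also have "\<dots> = a choose (i-1)" using a' i' by simp
  finally show ?case .
qed

lemma ksum_mono: "vld i as \<Longrightarrow> vld i bs \<Longrightarrow> bsum i as \<le> bsum i bs \<Longrightarrow> ksum i as \<le> ksum i bs"
proof (induction as arbitrary: i bs)
  case Nil
  then show ?case by simp
next
  case (Cons a as)
  show ?case
  proof (cases bs)
    case Nil
    then show ?thesis using Cons.prems bsum_pos[of i a as] by simp
  next
    case (Cons b bs')
    have va: "vld i (a#as)" and vb: "vld i (b#bs')" using Cons.prems \<open>bs = b#bs'\<close> by auto
    have le: "bsum i (a#as) \<le> bsum i (b#bs')" using Cons.prems \<open>bs = b#bs'\<close> by simp
    consider "a = b" | "b < a" | "a < b" by linarith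
    then show ?thesis
    proof cases
      case 1
      then have "ksum (i-1) as \<le> ksum (i-1) bs'" using Cons.IH[of "i-1" bs'] va vb le by simp
      then show ?thesis using 1 \<open>bs = b#bs'\<close> by simp
    next
      case 2
      have "bsum i (b#bs') < Suc b choose i" using bsum_upper vb .
      also have "\<dots> \<le> a choose i" using 2 by (intro binomial_right_mono) simp
      also have "\<dots> \<le> bsum i (a#as)" by simp
      finally show ?thesis using le by simp
    next
      case 3
      have "ksum i (a#as) \<le> a choose (i-1)" using ksum_top va .
      also have "\<dots> \<le> (b-1) choose (i-1)" using 3 by (intro binomial_right_mono) simp
      also have "\<dots> \<le> ksum i (b#bs')" by simp
      finally show ?thesis using \<open>bs = b#bs'\<close> by simp
    qed
  qed
qed

lemma kappa_mono:
  assumes "1 \<le> i" "1 \<le> m" "m \<le> m'"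
  shows "kappa i m \<le> kappa i m'"
proof -
  obtain as where as: "as \<noteq> []" "vld i as" "bsum i as = m" using exists_exp[OF assms(1,2)] by blast
  have m': "1 \<le> m'" using assms by simp
  obtain bs where bs: "bs \<noteq> []" "vld i bs" "bsum i bs = m'" using exists_exp[OF assms(1) m'] by blast
  show ?thesis using kappa_eq[OF as(2,1)] kappa_eq[OF bs(2,1)] ksum_mono[OF as(2) bs(2)] as bs assms by simp
qed

lemma kappa_1: "1 \<le> m \<Longrightarrow> kappa 1 m = 1"
  using kappa_eq[of 1 "[m]"] by simp

lemma vld_Suc: "vld K bs \<Longrightarrow> vld (Suc K) (map Suc bs)"
proof (induction bs arbitrary: K)
  case Nil
  then show ?case by simp
next
  case (Cons b bs)
  then have K1: "1 \<le> K" and v: "vld (K-1) bs" by auto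
  have "vld (Suc (K-1)) (map Suc bs)" using Cons.IH v by blast
  then have "vld K (map Suc bs)" using K1 by simp
  then show ?case using Cons.prems by auto
qed

lemma ksum_Suc: "vld K bs \<Longrightarrow> ksum (Suc K) (map Suc bs) = bsum K bs"
proof (induction bs arbitrary: K)
  case Nil
  then show ?case by simp
next
  case (Cons b bs)
  then have "ksum K (map Suc bs) = bsum (K-1) bs" using Cons.IH[of "K-1"] by simp
  then show ?case by simp
qed

lemma bsum_le_Suc: "vld K bs \<Longrightarrow> bsum K bs \<le> bsum (Suc K) (map Suc bs)"
proof (induction bs arbitrary: K)
  case Nil
  then show ?case by simp
next
  case (Cons b bs)
  then have "bsum (K-1) bs \<le> bsum K (map Suc bs)" using Cons.IH[of "K-1"] by simp
  then show ?case by simp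
qed

lemma qform_nonneg:
  fixes A Bc C x y :: real
  assumes "A \<ge> 0" "C \<ge> 0" "Bc^2 \<le> 4*A*C"
  shows "A*x^2 - Bc*x*y + C*y^2 \<ge> 0"
proof (cases "A = 0")
  case True
  then have "Bc^2 \<le> 0" using assms by simp
  moreover have "Bc^2 \<ge> 0" by simp
  ultimately have "Bc^2 = 0" by linarith
  then have "Bc = 0" by simp
  then show ?thesis using True assms by simp
next
  case False
  then have A: "A > 0" using assms by simp
  have "4*A*(A*x^2 - Bc*x*y + C*y^2) = (2*A*x - Bc*y)^2 + (4*A*C - Bc^2)*y^2"
    by (simp add: algebra_simps power2_eq_square)
  also have "\<dots> \<ge> 0" using assms by (intro add_nonneg_nonneg mult_nonneg_nonneg) auto
  finally show ?thesis using A by (simp add: zero_le_mult_iff)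
qed

lemma big_nonneg:
  fixes u j s t e :: real
  assumes u: "u \<ge> 0" and j: "j \<ge> 0" and s: "s \<ge> 0" and t: "t \<ge> 0" and e: "e \<ge> 0"
  shows "0 \<le> (u+4)*(u+3)*((j+1)*s+t)^2*(s+e) + (u+3)^2*(u+4)^2*((j+1)*s+t)*(s+e)^2
   + ((u+3)^2-1)*(u+3+j)*(u+4+j)*((j+1)*s+t)*s^2 - (u+3)*(u+3+j)*(u+4)*s^2*(s+e)
   + (u+3+j)*(u+4+j)*((j+1)*s+t)*(s+e) + (u+3)*(u+3+j)*(u+4)*(s+e)^2
   - 2*(u+3)^2*(u+4)*(u+3+j)*(s+e)*((j+1)*s+t)*s"
proof -
  have id: "(u+4)*(u+3)*((j+1)*s+t)^2*(s+e) + (u+3)^2*(u+4)^2*((j+1)*s+t)*(s+e)^2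
   + ((u+3)^2-1)*(u+3+j)*(u+4+j)*((j+1)*s+t)*s^2 - (u+3)*(u+3+j)*(u+4)*s^2*(s+e)
   + (u+3+j)*(u+4+j)*((j+1)*s+t)*(s+e) + (u+3)*(u+3+j)*(u+4)*(s+e)^2
   - 2*(u+3)^2*(u+4)*(u+3+j)*(s+e)*((j+1)*s+t)*s
   = (36 * e^2 + 12 * t * e + 12 * t^2 * e + 84 * s * e + 12 * s * t + 96 * s * t * e + 12 * s * t^2 + 48 * s^2 + 48 * s^2 * e + 12 * j * e^2 + 7 * j * t * e + 43 * j * s * e + 7 * j * s * t + 31 * j * s^2 + 12 * j * s^2 * e + j^2 * t * e + 8 * j^2 * s * e + j^2 * s * t + 8 * j^2 * s^2 + j^3 * s * e + j^3 * s^2 + 33 * u * e^2 + 7 * u * t * e + 7 * u * t^2 * e + 73 * u * s * e + 7 * u * s * t + 80 * u * s * t * e + 7 * u * s * t^2 + 40 * u * s^2 + 40 * u * s^2 * e + 7 * u * j * e^2 + 2 * u * j * t * e + 23 * u * j * s * e + 2 * u * j * s * t + 16 * u * j * s^2 + 7 * u * j * s^2 * e + 2 * u * j^2 * s * e + 2 * u * j^2 * s^2 + 10 * u^2 * e^2 + u^2 * t * e + u^2 * t^2 * e + 21 * u^2 * s * e + u^2 * s * t + 22 * u^2 * s * t * e + u^2 * s * t^2 + 11 * u^2 * s^2 + 11 * u^2 * s^2 * e + u^2 * j * e^2 + 3 * u^2 * j * s * e + 2 * u^2 * j * s^2 + u^2 * j * s^2 * e + u^3 * e^2 + 2 * u^3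 * s * e + 2 * u^3 * s * t * e + u^3 * s^2 + u^3 * s^2 * e) + s*((20 * j + 4 * j^2 + 8 * j^3 + 25 * u * j + 5 * u * j^2 + 6 * u * j^3 + 9 * u^2 * j + u^2 * j^2 + u^2 * j^3 + u^3 * j)*s^2 - (60 * j^2 + 59 * u * j^2 + 19 * u^2 * j^2 + 2 * u^3 * j^2)*s*e + (144 + 144 * j + 168 * u + 168 * u * j + 73 * u^2 + 73 * u^2 * j + 14 * u^3 + 14 * u^3 * j + u^4 + u^4 * j)*e^2)
     + t*((48 + 8 * j + 8 * j^2 + 40 * u + 6 * u * j + 6 * u * j^2 + 11 * u^2 + u^2 * j + u^2 * j^2 + u^3)*s^2 - (48 * j + 52 * u * j + 18 * u^2 * j + 2 * u^3 * j)*s*e + (144 + 168 * u + 73 * u^2 + 14 * u^3 + u^4)*e^2)"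
    by algebra
  have r: "0 \<le> 36 * e^2 + 12 * t * e + 12 * t^2 * e + 84 * s * e + 12 * s * t + 96 * s * t * e + 12 * s * t^2 + 48 * s^2 + 48 * s^2 * e + 12 * j * e^2 + 7 * j * t * e + 43 * j * s * e + 7 * j * s * t + 31 * j * s^2 + 12 * j * s^2 * e + j^2 * t * e + 8 * j^2 * s * e + j^2 * s * t + 8 * j^2 * s^2 + j^3 * s * e + j^3 * s^2 + 33 * u * e^2 + 7 * u * t * e + 7 * u * t^2 * e + 73 * u * s * e + 7 * u * s * t + 80 * u * s * t * e + 7 * u * s * t^2 + 40 * u * s^2 + 40 * u * s^2 * e + 7 * u * j * e^2 + 2 * u * j * t * e + 23 * u * j * s * e + 2 * u * j * s * t + 16 * u * j * s^2 + 7 * u * j * s^2 * e + 2 * u * j^2 * s * e + 2 * u * j^2 * s^2 + 10 * u^2 * e^2 + u^2 * t * e + u^2 * t^2 * e + 21 * u^2 * s * e + u^2 * s * t + 22 * u^2 * s * t * e + u^2 * s * t^2 + 11 * u^2 * s^2 + 11 * u^2 * s^2 * e + u^2 * j * e^2 + 3 * u^2 * j * s * e + 2 * u^2 * j * s^2 + u^2 * j * s^2 * e + u^3 * e^2 + 2 * u^3 * s * e + 2 * u^3 * s * t * e + u^3 * s^2 + u^3 * s^2 * e"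
    using assms by (intro add_nonneg_nonneg mult_nonneg_nonneg zero_le_power) auto
  have q3: "4*(20 * j + 4 * j^2 + 8 * j^3 + 25 * u * j + 5 * u * j^2 + 6 * u * j^3 + 9 * u^2 * j + u^2 * j^2 + u^2 * j^3 + u^3 * j)*(144 + 144 * j + 168 * u + 168 * u * j + 73 * u^2 + 73 * u^2 * j + 14 * u^3 + 14 * u^3 * j + u^4 + u^4 * j) - (60 * j^2 + 59 * u * j^2 + 19 * u^2 * j^2 + 2 * u^3 * j^2)^2 = 11520 * j + 13824 * j^2 + 6912 * j^3 + 1008 * j^4 + 27840 * u * j + 33408 * u * j^2 + 14400 * u * j^3 + 1752 * u * j^4 + 27824 * u^2 * j + 32928 * u^2 * j^2 + 12048 * u^2 * j^3 + 1183 * u^2 * j^4 + 15044 * u^3 * j + 17400 * u^3 * j^2 + 5228 * u^3 * j^3 + 390 * u^3 * j^4 + 4780 * u^4 * j + 5368 * u^4 * j^2 + 1248 * u^4 * j^3 + 63 * u^4 * j^4 + 896 * u^5 * j + 972 * u^5 * j^2 + 156 * u^5 * j^3 + 4 * u^5 * j^4 + 92 * u^6 * j + 96 * u^6 * j^2 + 8 * u^6 * j^3 + 4 * u^7 * j + 4 * u^7 * j^2"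
    by algebra
  have q3': "0 \<le> 11520 * j + 13824 * j^2 + 6912 * j^3 + 1008 * j^4 + 27840 * u * j + 33408 * u * j^2 + 14400 * u * j^3 + 1752 * u * j^4 + 27824 * u^2 * j + 32928 * u^2 * j^2 + 12048 * u^2 * j^3 + 1183 * u^2 * j^4 + 15044 * u^3 * j + 17400 * u^3 * j^2 + 5228 * u^3 * j^3 + 390 * u^3 * j^4 + 4780 * u^4 * j + 5368 * u^4 * j^2 + 1248 * u^4 * j^3 + 63 * u^4 * j^4 + 896 * u^5 * j + 972 * u^5 * j^2 + 156 * u^5 * j^3 + 4 * u^5 * j^4 + 92 * u^6 * j + 96 * u^6 * j^2 + 8 * u^6 * j^3 + 4 * u^7 * j + 4 * u^7 * j^2"
    using assms by (intro add_nonneg_nonneg mult_nonneg_nonneg zero_le_power) auto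
  have q4: "4*(48 + 8 * j + 8 * j^2 + 40 * u + 6 * u * j + 6 * u * j^2 + 11 * u^2 + u^2 * j + u^2 * j^2 + u^3)*(144 + 168 * u + 73 * u^2 + 14 * u^3 + u^4) - (48 * j + 52 * u * j + 18 * u^2 * j + 2 * u^3 * j)^2 = 27648 + 4608 * j + 2304 * j^2 + 55296 * u + 8832 * u * j + 3840 * u * j^2 + 47232 * u^2 + 6944 * u^2 * j + 2512 * u^2 * j^2 + 22336 * u^3 + 2872 * u^3 * j + 808 * u^3 * j^2 + 6316 * u^4 + 660 * u^4 * j + 128 * u^4 * j^2 + 1068 * u^5 + 80 * u^5 * j + 8 * u^5 * j^2 + 100 * u^6 + 4 * u^6 * j + 4 * u^7"
    by algebra
  have q4': "0 \<le> 27648 + 4608 * j + 2304 * j^2 + 55296 * u + 8832 * u * j + 3840 * u * j^2 + 47232 * u^2 + 6944 * u^2 * j + 2512 * u^2 * j^2 + 22336 * u^3 + 2872 * u^3 * j + 808 * u^3 * j^2 + 6316 * u^4 + 660 * u^4 * j + 128 * u^4 * j^2 + 1068 * u^5 + 80 * u^5 * j + 8 * u^5 * j^2 + 100 * u^6 + 4 * u^6 * j + 4 * u^7"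
    using assms by (intro add_nonneg_nonneg mult_nonneg_nonneg zero_le_power) auto
  have f1: "0 \<le> (20 * j + 4 * j^2 + 8 * j^3 + 25 * u * j + 5 * u * j^2 + 6 * u * j^3 + 9 * u^2 * j + u^2 * j^2 + u^2 * j^3 + u^3 * j)*s^2 - (60 * j^2 + 59 * u * j^2 + 19 * u^2 * j^2 + 2 * u^3 * j^2)*s*e + (144 + 144 * j + 168 * u + 168 * u * j + 73 * u^2 + 73 * u^2 * j + 14 * u^3 + 14 * u^3 * j + u^4 + u^4 * j)*e^2"
  proof (rule qform_nonneg)
    show "0 \<le> 20 * j + 4 * j^2 + 8 * j^3 + 25 * u * j + 5 * u * j^2 + 6 * u * j^3 + 9 * u^2 * j + u^2 * j^2 + u^2 * j^3 + u^3 * j" using assms by (intro add_nonneg_nonneg mult_nonneg_nonneg zero_le_power) auto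
    show "0 \<le> 144 + 144 * j + 168 * u + 168 * u * j + 73 * u^2 + 73 * u^2 * j + 14 * u^3 + 14 * u^3 * j + u^4 + u^4 * j" using assms by (intro add_nonneg_nonneg mult_nonneg_nonneg zero_le_power) auto
    show "(60 * j^2 + 59 * u * j^2 + 19 * u^2 * j^2 + 2 * u^3 * j^2)^2 \<le> 4*(20 * j + 4 * j^2 + 8 * j^3 + 25 * u * j + 5 * u * j^2 + 6 * u * j^3 + 9 * u^2 * j + u^2 * j^2 + u^2 * j^3 + u^3 * j)*(144 + 144 * j + 168 * u + 168 * u * j + 73 * u^2 + 73 * u^2 * j + 14 * u^3 + 14 * u^3 * j + u^4 + u^4 * j)" using q3 q3' by linarith
  qed
  have f2: "0 \<le> (48 + 8 * j + 8 * j^2 + 40 * u + 6 * u * j + 6 * u * j^2 + 11 * u^2 + u^2 * j + u^2 * j^2 + u^3)*s^2 - (48 * j + 52 * u * j + 18 * u^2 * j + 2 * u^3 * j)*s*e + (144 + 168 * u + 73 * u^2 + 14 * u^3 + u^4)*e^2"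
  proof (rule qform_nonneg)
    show "0 \<le> 48 + 8 * j + 8 * j^2 + 40 * u + 6 * u * j + 6 * u * j^2 + 11 * u^2 + u^2 * j + u^2 * j^2 + u^3" using assms by (intro add_nonneg_nonneg mult_nonneg_nonneg zero_le_power) auto
    show "0 \<le> 144 + 168 * u + 73 * u^2 + 14 * u^3 + u^4" using assms by (intro add_nonneg_nonneg mult_nonneg_nonneg zero_le_power) auto
    show "(48 * j + 52 * u * j + 18 * u^2 * j + 2 * u^3 * j)^2 \<le> 4*(48 + 8 * j + 8 * j^2 + 40 * u + 6 * u * j + 6 * u * j^2 + 11 * u^2 + u^2 * j + u^2 * j^2 + u^3)*(144 + 168 * u + 73 * u^2 + 14 * u^3 + u^4)" using q4 q4' by linarith
  qed
  have g1: "0 \<le> s*((20 * j + 4 * j^2 + 8 * j^3 + 25 * u * j + 5 * u * j^2 + 6 * u * j^3 + 9 * u^2 * j + u^2 * j^2 + u^2 * j^3 + u^3 * j)*s^2 - (60 * j^2 + 59 * u * j^2 + 19 * u^2 * j^2 + 2 * u^3 * j^2)*s*e + (144 + 144 * j + 168 * u + 168 * u * j + 73 * u^2 + 73 * u^2 * j + 14 * u^3 + 14 * u^3 * j + u^4 + u^4 * j)*e^2)"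
    using f1 s by (rule mult_nonneg_nonneg[rotated])
  have g2: "0 \<le> t*((48 + 8 * j + 8 * j^2 + 40 * u + 6 * u * j + 6 * u * j^2 + 11 * u^2 + u^2 * j + u^2 * j^2 + u^3)*s^2 - (48 * j + 52 * u * j + 18 * u^2 * j + 2 * u^3 * j)*s*e + (144 + 168 * u + 73 * u^2 + 14 * u^3 + u^4)*e^2)"
    using f2 t by (rule mult_nonneg_nonneg[rotated])
  have "0 \<le> (36 * e^2 + 12 * t * e + 12 * t^2 * e + 84 * s * e + 12 * s * t + 96 * s * t * e + 12 * s * t^2 + 48 * s^2 + 48 * s^2 * e + 12 * j * e^2 + 7 * j * t * e + 43 * j * s * e + 7 * j * s * t + 31 * j * s^2 + 12 * j * s^2 * e + j^2 * t * e + 8 * j^2 * s * e + j^2 * s * t + 8 * j^2 * s^2 + j^3 * s * e + j^3 * s^2 + 33 * u * e^2 + 7 * u * t * e + 7 * u * t^2 * e + 73 * u * s * e + 7 * u * s * t + 80 * u * s * t * e + 7 * u * s * t^2 + 40 * u * s^2 + 40 * u * s^2 * e + 7 * u * j * e^2 + 2 * u * j * t * e + 23 * u * j * s * e + 2 * u * j * s * t + 16 * u * j * s^2 + 7 * u * j * s^2 * e + 2 * u * j^2 * s * e + 2 * u * j^2 * s^2 + 10 * u^2 * e^2 + u^2 * t * e + u^2 * t^2 * e + 21 * u^2 * s * e + u^2 * s * t + 22 * u^2 * s * t * e + u^2 * s * t^2 + 11 * u^2 * s^2 + 11 * u^2 * s^2 * e + u^2 * j * e^2 + 3 * u^2 *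 j * s * e + 2 * u^2 * j * s^2 + u^2 * j * s^2 * e + u^3 * e^2 + 2 * u^3 * s * e + 2 * u^3 * s * t * e + u^3 * s^2 + u^3 * s^2 * e) + s*((20 * j + 4 * j^2 + 8 * j^3 + 25 * u * j + 5 * u * j^2 + 6 * u * j^3 + 9 * u^2 * j + u^2 * j^2 + u^2 * j^3 + u^3 * j)*s^2 - (60 * j^2 + 59 * u * j^2 + 19 * u^2 * j^2 + 2 * u^3 * j^2)*s*e + (144 + 144 * j + 168 * u + 168 * u * j + 73 * u^2 + 73 * u^2 * j + 14 * u^3 + 14 * u^3 * j + u^4 + u^4 * j)*e^2)
     + t*((48 + 8 * j + 8 * j^2 + 40 * u + 6 * u * j + 6 * u * j^2 + 11 * u^2 + u^2 * j + u^2 * j^2 + u^3)*s^2 - (48 * j + 52 * u * j + 18 * u^2 * j + 2 * u^3 * j)*s*e + (144 + 168 * u + 73 * u^2 + 14 * u^3 + u^4)*e^2)"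
    using r g1 g2 by linarith
  then show ?thesis using id by simp
qed

lemma key_real:
  fixes K B P s a k1 :: real
  assumes K3: "K \<ge> 3" and BK: "B \<ge> K" and s0: "0 \<le> s" and sa: "s \<le> a"
    and a0: "0 < a" and t0: "(B-K+1)*s \<le> K*P" and k1: "0 \<le> k1"
    and IH: "K*k1*a \<ge> (K-1)*s^2 + a"
  shows "(K+1)*(K*P/B + k1)*((B+1)*P/(K+1) + a) \<ge> K*(P+s)^2 + (B+1)*P/(K+1) + a"
proof -
  obtain u where u: "K = u+3" "u \<ge> 0" using K3 by (intro that[of "K-3"]) auto
  obtain j where j: "B = u+3+j" "j \<ge> 0" using BK u by (intro that[of "B-K"]) auto
  define X where "X = K*P"
  obtain t where t: "X = (j+1)*s+t" "t \<ge> 0"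
  proof -
    have "(j+1)*s \<le> X" using t0 u j unfolding X_def by simp
    then show ?thesis by (intro that[of "X-(j+1)*s"]) auto
  qed
  obtain e where e: "a = s+e" "e \<ge> 0" using sa by (intro that[of "a-s"]) auto
  have Bpos: "B > 0" using BK K3 by simp
  define D2 where "D2 = (K+1)*K*X^2*a + K^2*(K+1)^2*X*a^2 + (K^2-1)*B*(B+1)*X*s^2
     - K*B*(K+1)*s^2*a + B*(B+1)*X*a + K*B*(K+1)*a^2 - 2*K^2*(K+1)*B*a*X*s"
  have D2nn: "D2 \<ge> 0"
  proof -
    have "D2 = (u+4)*(u+3)*((j+1)*s+t)^2*(s+e) + (u+3)^2*(u+4)^2*((j+1)*s+t)*(s+e)^2
     + ((u+3)^2-1)*(u+3+j)*(u+4+j)*((j+1)*s+t)*s^2 - (u+3)*(u+3+j)*(u+4)*s^2*(s+e)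
     + (u+3+j)*(u+4+j)*((j+1)*s+t)*(s+e) + (u+3)*(u+3+j)*(u+4)*(s+e)^2
     - 2*(u+3)^2*(u+4)*(u+3+j)*(s+e)*((j+1)*s+t)*s"
      unfolding D2_def t(1) e(1) j(1) u(1) by algebra
    then show ?thesis using big_nonneg[OF u(2) j(2) s0 t(2) e(2)] by simp
  qed
  define D where "D = (K+1)*(K*(K*P/B)*a + (K-1)*s^2 + a)*((B+1)*P/(K+1) + a) - K*a*(K*(P+s)^2 + (B+1)*P/(K+1) + a)"
  define k0 where "k0 = K*P/B"
  define n0 where "n0 = (B+1)*P/(K+1)"
  have e1: "B*k0 = K*P" unfolding k0_def using Bpos by simp
  have e2: "(K+1)*n0 = (B+1)*P" unfolding n0_def using K3 by simp
  have D': "D = (K+1)*(K*k0*a + (K-1)*s^2 + a)*(n0 + a) - K*a*(K*(P+s)^2 + n0 + a)"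
    unfolding D_def k0_def n0_def by simp
  have "K*B*(K+1)*D = D2"
    unfolding D' D2_def X_def using e1 e2 by algebra
  then have "0 \<le> (K*B*(K+1))*D" using D2nn by simp
  moreover have "K*B*(K+1) > 0" using Bpos K3 by simp
  ultimately have Dnn: "D \<ge> 0" by (simp add: zero_le_mult_iff)
  have P0: "P \<ge> 0"
  proof -
    have "0 \<le> (B-K+1)*s" using BK s0 by simp
    then have "0 \<le> K*P" using t0 by linarith
    then show ?thesis using K3 by (simp add: zero_le_mult_iff)
  qed
  have n0nn: "n0 + a \<ge> 0" unfolding n0_def using P0 Bpos K3 a0 by simp
  have "K*a*((K+1)*(k0 + k1)*(n0 + a)) = (K+1)*(K*k0*a + K*k1*a)*(n0 + a)"
    by algebra
  also have "\<dots> \<ge> (K+1)*(K*k0*a + (K-1)*s^2 + a)*(n0 + a)"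
    using IH K3 n0nn by (intro mult_left_mono mult_right_mono) auto
  finally have "K*a*((K+1)*(k0 + k1)*(n0 + a)) - K*a*(K*(P+s)^2 + n0 + a) \<ge> D"
    unfolding D' by linarith
  then have "K*a*((K+1)*(k0 + k1)*(n0 + a) - (K*(P+s)^2 + n0 + a)) \<ge> 0"
    using Dnn by (simp add: algebra_simps)
  moreover have "K*a > 0" using K3 a0 by simp
  ultimately have "(K+1)*(k0 + k1)*(n0 + a) - (K*(P+s)^2 + n0 + a) \<ge> 0"
    by (simp add: zero_le_mult_iff)
  then show ?thesis unfolding k0_def n0_def by simp
qed

lemma choose_id1: "0 < K \<Longrightarrow> K * (B choose K) = B * ((B-1) choose (K-1))"
  by (rule times_binomial_minus1_eq)

lemma choose_id2: "Suc K * (Suc B choose Suc K) = Suc B * (B choose K)"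
  by (rule Suc_times_binomial)

lemma choose_id3: "1 \<le> K \<Longrightarrow> K \<le> B \<Longrightarrow> (B - K + 1) * (B choose (K-1)) = K * (B choose K)"
proof -
  assume K: "1 \<le> K" "K \<le> B"
  have e: "B - K + 1 = B - (K-1)" using K by simp
  have "(B - K + 1) * (B choose (K-1)) = (B - (K-1)) * (B choose (K-1))" using e by simp
  also have "\<dots> = B * ((B-1) choose (K-1))" by (rule binomial_absorb_comp)
  also have "\<dots> = K * (B choose K)" using K by (intro times_binomial_minus1_eq[symmetric]) simp
  finally show ?thesis .
qed

lemma big_choose:
  assumes "2 \<le> K" "K \<le> B"
  shows "B * (B+1) \<le> K * (K+1) * (B choose K)"
proof -
  have a: "K * (B choose K) = B * ((B-1) choose (K-1))" using assms by (intro times_binomial_minus1_eq) simp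
  have b: "(K-1) * ((B-1) choose (K-1)) = (B-1) * ((B-1-1) choose (K-1-1))"
    using assms by (intro times_binomial_minus1_eq) simp
  have "K-1-1 \<le> B-1-1" using assms by simp
  then have "0 < (B-1-1) choose (K-1-1)" by (rule zero_less_binomial)
  then have c: "(B-1-1) choose (K-1-1) \<ge> 1" by linarith
  have "(K-1) * (K * (K+1) * (B choose K)) = (K+1) * (K-1) * (K * (B choose K))"
    by (simp only: mult_ac)
  also have "\<dots> = (K+1) * (K-1) * (B * ((B-1) choose (K-1)))" by (simp only: a)
  also have "\<dots> = (K+1) * B * ((K-1) * ((B-1) choose (K-1)))" by (simp only: mult_ac)
  also have "\<dots> = (K+1) * B * ((B-1) * ((B-1-1) choose (K-1-1)))" using b by simp
  also have "\<dots> \<ge> (K+1) * B * (B-1)" using c by simp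
  finally have d: "(K+1) * B * (B-1) \<le> (K-1) * (K * (K+1) * (B choose K))" .
  have e: "(K-1) * (B * (B+1)) \<le> (K+1) * B * (B-1)"
  proof -
    obtain K' where K': "K = Suc K'" using assms by (cases K) auto
    obtain B' where B': "B = Suc B'" using assms by (cases B) auto
    have "K' \<le> B'" using assms K' B' by simp
    then have "K' * (B' + 2) \<le> (K' + 2) * B'" by (simp add: algebra_simps)
    then have "(K-1) * (B+1) \<le> (K+1) * (B-1)" unfolding K' B' by (simp add: algebra_simps)
    then have "B * ((K-1) * (B+1)) \<le> B * ((K+1) * (B-1))" by (rule mult_left_mono) simp
    then show ?thesis by (simp only: mult_ac)
  qed
  have "(K-1) * (B * (B+1)) \<le> (K-1) * (K * (K+1) * (B choose K))" using d e by linarith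
  then show ?thesis using assms by simp
qed

lemma lin6: "6*(R - L) = E \<Longrightarrow> 0 \<le> (E::real) \<Longrightarrow> L \<le> R"
  by simp

lemma k2_poly:
  fixes v w :: real
  assumes "v \<ge> 0" "w \<ge> 0"
  shows "3*(v+2+w)*((v+3+w)*(v+2+w)*(v+1+w) + 3*(v+2)*(v+1)) - 3*((v+2+w)*(v+1+w) + 2*(v+1))^2
     - ((v+3+w)*(v+2+w)*(v+1+w) + 3*(v+2)*(v+1)) \<ge> 0"
proof -
  have "3*(v+2+w)*((v+3+w)*(v+2+w)*(v+1+w) + 3*(v+2)*(v+1)) - 3*((v+2+w)*(v+1+w) + 2*(v+1))^2
     - ((v+3+w)*(v+2+w)*(v+1+w) + 3*(v+2)*(v+1)) = 12 + 19*w + 12*w^2 + 5*w^3 + 16*v + 15*v*w + 3*v*w^2 + 6*v^2 + 2*v^3"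
    by algebra
  moreover have "0 \<le> 12 + 19*w + 12*w^2 + 5*w^3 + 16*v + 15*v*w + 3*v*w^2 + 6*v^2 + 2*v^3"
    using assms by (intro add_nonneg_nonneg mult_nonneg_nonneg zero_le_power) auto
  ultimately show ?thesis by simp
qed

lemma Slemma:
  "vld K bs \<Longrightarrow> bs \<noteq> [] \<Longrightarrow> 2 \<le> K \<Longrightarrow>
    K * (bsum K bs)^2 + bsum (Suc K) (map Suc bs) \<le> (K+1) * ksum K bs * bsum (Suc K) (map Suc bs)"
proof (induction bs arbitrary: K)
  case Nil
  then show ?case by simp
next
  case (Cons B T)
  have KB: "K \<le> B" and lt: "\<forall>x\<in>set T. x < B" and vT: "vld (K-1) T" and K2: "2 \<le> K"
    using Cons.prems by auto
  define P where "P = B choose K"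
  define k0 where "k0 = (B-1) choose (K-1)"
  define n0 where "n0 = Suc B choose Suc K"
  have h1: "K * P = B * k0" unfolding P_def k0_def using K2 by (intro times_binomial_minus1_eq) simp
  have h2: "(K+1) * n0 = (B+1) * P" unfolding P_def n0_def using Suc_times_binomial[of K B] by simp
  have Bpos: "B > 0" using KB K2 by simp
  show ?case
  proof (cases T)
    case Nil
    have h3: "B * (B+1) \<le> K * (K+1) * P" unfolding P_def using big_choose K2 KB by blast
    have lhs: "bsum K (B#T) = P" "ksum K (B#T) = k0" "bsum (Suc K) (map Suc (B#T)) = n0"
      unfolding P_def k0_def n0_def using Nil by simp_all
    have "(K+1) * (B * n0) = B * (B+1) * P" using h2 by (simp add: algebra_simps)
    also have "\<dots> \<le> K * (K+1) * P * P" using h3 by simp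
    finally have "(K+1) * (B * n0) \<le> (K+1) * (K * P * P)" by (simp add: algebra_simps)
    then have h4: "B * n0 \<le> K * P * P" using mult_le_cancel1[of "K+1" "B*n0" "K*P*P"] by simp
    have "B * (K * P^2 + n0) \<le> B * ((K+1) * k0 * n0)"
    proof -
      have "B * ((K+1) * k0 * n0) = (K+1) * n0 * (B * k0)" by (simp add: algebra_simps)
      also have "\<dots> = (B+1) * P * (K * P)" using h1 h2 by simp
      also have "\<dots> = B * (K * P^2) + K * P * P" by (simp add: algebra_simps power2_eq_square)
      finally show ?thesis using h4 by (simp add: algebra_simps)
    qed
    then have "K * P^2 + n0 \<le> (K+1) * k0 * n0" using Bpos by simp
    then show ?thesis using lhs by simp
  next
    case (Cons b T')
    show ?thesis
    proof (cases "K = 2")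
      case True
      have "T' = []" using vT Cons True by (cases T') auto
      have b1: "1 \<le> b" and bB: "b < B" using vT Cons True lt by auto
      have p: "bsum K (B#T) = (B choose 2) + b" using Cons \<open>T' = []\<close> True by simp
      have kk: "ksum K (B#T) = B" using Cons \<open>T' = []\<close> True Bpos by simp
      have N: "bsum (Suc K) (map Suc (B#T)) = (Suc B choose 3) + (Suc b choose 2)"
        using Cons \<open>T' = []\<close> True by (simp add: numeral_3_eq_3 numeral_2_eq_2 del: binomial_Suc_Suc)
      have c2: "2 * (B choose 2) = B * (B - 1)" using times_binomial_minus1_eq[of 2 B] by simp
      have c2b: "2 * (Suc b choose 2) = Suc b * b" using times_binomial_minus1_eq[of 2 "Suc b"] by simp
      have c3: "3 * (Suc B choose 3) = Suc B * (B choose 2)" using times_binomial_minus1_eq[of 3 "Suc B"] by simp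
      define v where "v = real b - 1"
      define w where "w = real B - real b - 1"
      have v0: "v \<ge> 0" and w0: "w \<ge> 0" unfolding v_def w_def using b1 bB by auto
      have rb: "real b = v + 1" and rB: "real B = v + 2 + w" unfolding v_def w_def by auto
      have R2: "real (B choose 2) = (v+2+w)*(v+1+w)/2"
      proof -
        have "real (2 * (B choose 2)) = real (B * (B-1))" using c2 by simp
        then have "2 * real (B choose 2) = real B * (real B - 1)" using Bpos by (simp add: of_nat_diff)
        then show ?thesis using rB by (simp add: algebra_simps)
      qed
      have R2b: "real (Suc b choose 2) = (v+2)*(v+1)/2"
      proof -
        have "real (2 * (Suc b choose 2)) = real (Suc b * b)" using c2b by simp
        then have "2 * real (Suc b choose 2) = (real b + 1) * real b" by (simp add: algebra_simps)
        then show ?thesis using rb by (simp add: algebra_simps)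
      qed
      have R3: "real (Suc B choose 3) = (v+3+w)*(v+2+w)*(v+1+w)/6"
      proof -
        have "real (3 * (Suc B choose 3)) = real (Suc B * (B choose 2))" using c3 by simp
        then have "3 * real (Suc B choose 3) = (real B + 1) * real (B choose 2)" by (simp add: algebra_simps)
        then show ?thesis using R2 rB by (simp add: algebra_simps)
      qed
      have key: "3*(v+2+w)*((v+3+w)*(v+2+w)*(v+1+w) + 3*(v+2)*(v+1)) - 3*((v+2+w)*(v+1+w) + 2*(v+1))^2
     - ((v+3+w)*(v+2+w)*(v+1+w) + 3*(v+2)*(v+1)) \<ge> 0" using k2_poly v0 w0 .
      define x2 where "x2 = real (B choose 2)"
      define y3 where "y3 = real (Suc B choose 3)"
      define z2 where "z2 = real (Suc b choose 2)"
      have hx: "2*x2 = (v+2+w)*(v+1+w)" unfolding x2_def using R2 by simp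
      have hy: "6*y3 = (v+3+w)*(v+2+w)*(v+1+w)" unfolding y3_def using R3 by simp
      have hz: "2*z2 = (v+2)*(v+1)" unfolding z2_def using R2b by simp
      have L: "real (K * (bsum K (B#T))^2 + bsum (Suc K) (map Suc (B#T))) = 2*(x2 + (v+1))^2 + (y3 + z2)"
        unfolding p N x2_def y3_def z2_def by (simp add: True rb)
      have R: "real ((K+1) * ksum K (B#T) * bsum (Suc K) (map Suc (B#T))) = 3*(v+2+w)*(y3 + z2)"
        unfolding kk N y3_def z2_def by (simp add: True rB)
      define LL where "LL = 2*(x2 + (v+1))^2 + (y3 + z2)"
      define RR where "RR = 3*(v+2+w)*(y3 + z2)"
      define E where "E = 3*(v+2+w)*((v+3+w)*(v+2+w)*(v+1+w) + 3*(v+2)*(v+1)) - 3*((v+2+w)*(v+1+w) + 2*(v+1))^2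
     - ((v+3+w)*(v+2+w)*(v+1+w) + 3*(v+2)*(v+1))"
      have E0: "0 \<le> E" unfolding E_def using key .
      have "6*(RR - LL) = E" unfolding LL_def RR_def E_def using hx hy hz by algebra
      then have "LL \<le> RR" using E0 lin6 by blast
      then have "real (K * (bsum K (B#T))^2 + bsum (Suc K) (map Suc (B#T))) \<le> real ((K+1) * ksum K (B#T) * bsum (Suc K) (map Suc (B#T)))"
        unfolding L R LL_def RR_def by linarith
      then show ?thesis by linarith
    next
      case False
      then have K3: "3 \<le> K" using K2 by simp
      have TnE: "T \<noteq> []" using Cons by simp
      define p' where "p' = bsum (K-1) T"
      define k' where "k' = ksum (K-1) T"
      define N' where "N' = bsum K (map Suc T)"
      have NN': "N' = bsum (Suc (K-1)) (map Suc T)" unfolding N'_def using K3 by simp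
      have IH: "(K-1) * p'^2 + N' \<le> K * k' * N'"
        using Cons.IH[OF vT TnE] K3 unfolding p'_def k'_def NN' by simp
      have p'N': "p' \<le> N'" unfolding p'_def NN' using bsum_le_Suc vT by blast
      have p'1: "1 \<le> p'" unfolding p'_def using bsum_pos[of "K-1" b T'] vT Cons by simp
      have p'up: "p' < B choose (K-1)"
      proof -
        have "p' < Suc b choose (K-1)" unfolding p'_def using bsum_upper[of "K-1" b T'] vT Cons by simp
        also have "\<dots> \<le> B choose (K-1)" using lt Cons by (intro binomial_right_mono) simp
        finally show ?thesis .
      qed
      have c3': "(B - K + 1) * (B choose (K-1)) = K * P" unfolding P_def using choose_id3 K3 KB by simp
      have t0: "(real B - real K + 1) * real p' \<le> real K * real P"
      proof -
        have "(B - K + 1) * p' \<le> (B - K + 1) * (B choose (K-1))" using p'up by (intro mult_left_mono) auto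
        then have "(B - K + 1) * p' \<le> K * P" using c3' by simp
        then have "real (B - K + 1) * real p' \<le> real K * real P" by (metis of_nat_le_iff of_nat_mult)
        moreover have "real (B - K + 1) = real B - real K + 1" using KB by (simp add: of_nat_diff)
        ultimately show ?thesis by (simp add: algebra_simps)
      qed
      have IHr: "real K * real k' * real N' \<ge> (real K - 1) * (real p')^2 + real N'"
      proof -
        have "real ((K-1) * p'^2 + N') \<le> real (K * k' * N')" using IH by linarith
        then show ?thesis using K3 by (simp add: of_nat_diff)
      qed
      have kr: "(real K + 1) * (real K * real P / real B + real k') * ((real B + 1) * real P / (real K + 1) + real N')
          \<ge> real K * (real P + real p')^2 + (real B + 1) * real P / (real K + 1) + real N'"
        using key_real[of "real K" "real B" "real p'" "real N'" "real P" "real k'"] K3 KB p'N' p'1 t0 IHr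
        by simp
      have e1: "real K * real P / real B = real k0" using h1 Bpos
        by (metis (mono_tags, lifting) nonzero_mult_div_cancel_left of_nat_0_less_iff of_nat_mult order_less_irrefl)
      have e2: "(real B + 1) * real P / (real K + 1) = real n0"
      proof -
        have "real ((K+1) * n0) = real ((B+1) * P)" using h2 by simp
        then have "(real K + 1) * real n0 = (real B + 1) * real P" by (simp add: algebra_simps)
        then show ?thesis by (simp add: field_simps)
      qed
      have "(real K + 1) * (real k0 + real k') * (real n0 + real N') \<ge> real K * (real P + real p')^2 + real n0 + real N'"
        using kr e1 e2 by simp
      then have "real (K * (P + p')^2 + (n0 + N')) \<le> real ((K+1) * (k0 + k') * (n0 + N'))" by (simp add: algebra_simps)
      then have fin: "K * (P + p')^2 + (n0 + N') \<le> (K+1) * (k0 + k') * (n0 + N')" by linarith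
      have d1: "bsum K (B#T) = P + p'" unfolding P_def p'_def by simp
      have d2: "ksum K (B#T) = k0 + k'" unfolding k0_def k'_def by simp
      have d3: "bsum (Suc K) (map Suc (B#T)) = n0 + N'" unfolding n0_def N'_def by simp
      show ?thesis unfolding d1 d2 d3 using fin .
    qed
  qed
qed

lemma mac_step:
  assumes k2: "2 \<le> k" and p1: "1 \<le> p" and m1: "1 \<le> m" and kq: "kappa (k-1) p \<le> q"
    and nw: "k * q * m \<le> (k-1) * p^2"
  shows "kappa k m \<le> p"
proof -
  define K where "K = k - 1"
  have kK: "k = Suc K" and K1: "1 \<le> K" unfolding K_def using k2 by auto
  obtain bs where bs: "bs \<noteq> []" "vld K bs" "bsum K bs = p" using exists_exp[OF K1 p1] by blast
  define N where "N = bsum k (map Suc bs)"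
  have vN: "vld k (map Suc bs)" unfolding kK using vld_Suc bs(2) by blast
  have kN: "kappa k N = p" unfolding N_def using kappa_eq[OF vN] bs ksum_Suc[OF bs(2)] kK by simp
  have N1: "1 \<le> N" unfolding N_def using bsum_le_Suc[OF bs(2)] bs(3) p1 kK by simp
  show ?thesis
  proof (cases "m \<le> N")
    case True
    then show ?thesis using kappa_mono[of k m N] kN m1 k2 by simp
  next
    case False
    then have mN: "N + 1 \<le> m" by simp
    have kap: "kappa K p = ksum K bs" using kappa_eq[OF bs(2,1)] bs(3) by simp
    have kq': "ksum K bs \<le> q" using kq kap unfolding K_def by simp
    have ks1: "1 \<le> ksum K bs"
    proof -
      obtain b bs' where "bs = b # bs'" using bs(1) by (cases bs) auto
      then have "K \<le> b" using bs(2) by simp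
      then have "K - 1 \<le> b - 1" by simp
      then have "0 < (b - 1) choose (K - 1)" by (rule zero_less_binomial)
      then have "(b - 1) choose (K - 1) \<ge> 1" by linarith
      then show ?thesis using \<open>bs = b # bs'\<close> by simp
    qed
    have "K * p^2 < k * ksum K bs * (N + 1)"
    proof (cases "K = 1")
      case True
      obtain b where "bs = [b]" using bs(1,2) True by (cases bs; cases "tl bs") auto
      then have "b = p" "ksum K bs = 1" "N = Suc p choose 2" using bs(3) True unfolding N_def kK
        by (auto simp: numeral_2_eq_2)
      moreover have "2 * (Suc p choose 2) = Suc p * p" using times_binomial_minus1_eq[of 2 "Suc p"] by simp
      ultimately show ?thesis using True kK by (simp add: power2_eq_square algebra_simps)
    next
      case False
      then have "2 \<le> K" using K1 by simp
      then have "K * p^2 + N \<le> (K+1) * ksum K bs * N" using Slemma bs unfolding N_def kK by blast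
      moreover have "(K+1) * ksum K bs * N < k * ksum K bs * (N+1)" using ks1 kK by simp
      ultimately show ?thesis using N1 by linarith
    qed
    also have "\<dots> \<le> k * q * m" using kq' mN by (intro mult_mono) auto
    also have "\<dots> \<le> K * p^2" using nw unfolding K_def .
    finally show ?thesis by simp
  qed
qed

lemma macaulay_seq:
  fixes a :: "nat \<Rightarrow> nat" and d :: nat
  assumes a0: "a 0 = 1" and pos: "\<forall>k\<le>d. 1 \<le> a k"
    and nw: "\<forall>k. 2 \<le> k \<longrightarrow> k \<le> d \<longrightarrow> k * a (k-2) * a k \<le> (k-1) * (a (k-1))^2"
  shows "\<forall>k. 1 \<le> k \<longrightarrow> k \<le> d \<longrightarrow> kappa k (a k) \<le> a (k-1)"
proof (intro allI impI)
  fix k assume "1 \<le> k" "k \<le> d"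
  then show "kappa k (a k) \<le> a (k-1)"
  proof (induction k rule: nat_induct_at_least)
    case base
    then show ?case using kappa_1 pos a0 by simp
  next
    case (Suc n)
    have IH: "kappa n (a n) \<le> a (n-1)" using Suc by simp
    show ?case
    proof (rule mac_step)
      show "2 \<le> Suc n" using Suc by simp
      show "1 \<le> a (Suc n - 1)" using pos Suc by simp
      show "1 \<le> a (Suc n)" using pos Suc by simp
      show "kappa (Suc n - 1) (a (Suc n - 1)) \<le> a (Suc n - 2)" using IH by simp
      have "2 \<le> Suc n" "Suc n \<le> d" using Suc by auto
      then show "Suc n * a (Suc n - 2) * a (Suc n) \<le> (Suc n - 1) * (a (Suc n - 1))^2"
        using nw by blast
    qed
  qed
qed

lemma map_poly_of_real_mult:
  "map_poly (of_real::real\<Rightarrow>complex) (p * q) = map_poly of_real p * map_poly of_real q"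
  by (intro poly_eqI) (simp add: coeff_map_poly coeff_mult of_real_sum)

lemma poly_map_of_real: "poly (map_poly (of_real::real\<Rightarrow>complex) p) (of_real x) = of_real (poly p x)"
  by (induction p) (auto simp: map_poly_pCons)

lemma real_roots_factor:
  fixes p :: "real poly"
  assumes "p \<noteq> 0" "\<forall>z. poly (map_poly complex_of_real p) z = 0 \<longrightarrow> z \<in> \<real>"
  shows "\<exists>c rs. c \<noteq> 0 \<and> p = smult c (\<Prod>r\<leftarrow>rs. [:-r, 1:])"
  using assms
proof (induction "degree p" arbitrary: p)
  case 0
  then obtain a where a: "p = pCons a 0" using degree_eq_zeroE by metis
  then have "a \<noteq> 0" using 0 by simp
  then show ?case using a by (intro exI[of _ a] exI[of _ "[]"]) simp
next
  case (Suc n)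
  define P where "P = map_poly complex_of_real p"
  have dP: "degree P = degree p" unfolding P_def by (intro degree_map_poly) simp
  have "degree P \<noteq> 0" using dP Suc.hyps(2) by simp
  then have "\<not> constant (poly P)" by (simp add: constant_degree)
  then obtain z where z: "poly P z = 0" using fundamental_theorem_of_algebra by blast
  then have "z \<in> \<real>" using Suc.prems unfolding P_def by blast
  then obtain r where r: "z = complex_of_real r" using Reals_cases by blast
  have "poly p r = 0" using z r poly_map_of_real[of p r] unfolding P_def by simp
  then have "[:-r, 1:] dvd p" using poly_eq_0_iff_dvd by blast
  then obtain q where q: "p = [:-r, 1:] * q" by (elim dvdE)
  have q0: "q \<noteq> 0" using q Suc.prems by auto
  have "degree ([:-r, 1:] * q) = degree [:-r, 1:] + degree q" by (rule degree_mult_eq) (use q0 in simp_all)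
  then have "degree p = 1 + degree q" using q by simp
  then have dq: "degree q = n" using Suc.hyps(2) by simp
  have "\<forall>w. poly (map_poly complex_of_real q) w = 0 \<longrightarrow> w \<in> \<real>"
  proof (intro allI impI)
    fix w assume "poly (map_poly complex_of_real q) w = 0"
    then have "poly (map_poly complex_of_real p) w = 0" unfolding q map_poly_of_real_mult by simp
    then show "w \<in> \<real>" using Suc.prems by blast
  qed
  then obtain c rs where crs: "c \<noteq> 0" "q = smult c (\<Prod>r\<leftarrow>rs. [:-r, 1:])"
    using Suc.hyps(1)[of q] dq q0 by blast
  have "p = smult c (\<Prod>r\<leftarrow>(r#rs). [:-r, 1:])" using q crs by (simp add: mult_smult_right)
  then show ?case using crs by blast
qed

lemma coeff_fpoly:
  "coeff (fpoly d f) k = (if k = 0 then 1 else if k \<le> d then real (f (k-1)) else 0)"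
proof -
  have "coeff (fpoly d f) k = coeff 1 k + (\<Sum>i\<in>{1..d}. (if i = k then real (f (i-1)) else 0))"
    unfolding fpoly_def by (simp add: coeff_sum)
  also have "\<dots> = (if k = 0 then 1 else if k \<le> d then real (f (k-1)) else 0)"
    by (cases k) (auto simp: sum.delta)
  finally show ?thesis .
qed

lemma poly_fpoly_pos: "x \<ge> 0 \<Longrightarrow> poly (fpoly d f) x \<ge> 1"
proof -
  assume x: "x \<ge> 0"
  have "poly (fpoly d f) x = 1 + (\<Sum>i\<in>{1..d}. real (f (i-1)) * x^i)"
    unfolding fpoly_def by (simp add: poly_sum poly_monom)
  moreover have "(\<Sum>i\<in>{1..d}. real (f (i-1)) * x^i) \<ge> 0" using x by (intro sum_nonneg) simp
  ultimately show ?thesis by simp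
qed

definition NWP :: "(nat \<Rightarrow> real) \<Rightarrow> bool" where
  "NWP c \<longleftrightarrow> (\<forall>k. c k \<ge> 0) \<and> (\<forall>k. c k = 0 \<longrightarrow> c (Suc k) = 0) \<and>
     (\<forall>j. real (j+2) * c j * c (j+2) \<le> real (j+1) * (c (j+1))^2)"

lemma nw_step:
  assumes N: "NWP c" and rho: "\<rho> > 0"
    and c': "\<And>k. c' k = \<rho> * c k + (case k of 0 \<Rightarrow> 0 | Suc i \<Rightarrow> c i)"
  shows "NWP c'"
proof -
  have nn: "\<And>k. c k \<ge> 0" and zp: "\<And>k. c k = 0 \<Longrightarrow> c (Suc k) = 0"
    and nw: "\<And>j. real (j+2) * c j * c (j+2) \<le> real (j+1) * (c (j+1))^2"
    using N unfolding NWP_def by auto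
  have nn': "\<And>k. c' k \<ge> 0" using nn rho unfolding c' by (auto split: nat.splits)
  have zp': "\<And>k. c' k = 0 \<Longrightarrow> c' (Suc k) = 0"
  proof -
    fix k assume h: "c' k = 0"
    have a: "\<rho> * c k \<ge> 0" using nn rho by simp
    have b: "(case k of 0 \<Rightarrow> 0 | Suc i \<Rightarrow> c i) \<ge> 0" using nn by (auto split: nat.splits)
    have "\<rho> * c k = 0" using h a b unfolding c' by linarith
    then have ck: "c k = 0" using rho by simp
    then have "c (Suc k) = 0" using zp by simp
    then show "c' (Suc k) = 0" unfolding c' using ck by simp
  qed
  have nw': "\<And>j. real (j+2) * c' j * c' (j+2) \<le> real (j+1) * (c' (j+1))^2"
  proof -
    fix j
    define d where "d = (case j of 0 \<Rightarrow> 0 | Suc i \<Rightarrow> c i)"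
    have d0: "d \<ge> 0" unfolding d_def using nn by (auto split: nat.splits)
    have e0: "c' j = \<rho> * c j + d" unfolding c' d_def by simp
    have e1: "c' (j+1) = \<rho> * c (j+1) + c j" unfolding c' by simp
    have e2: "c' (j+2) = \<rho> * c (j+2) + c (j+1)" unfolding c' by (simp add: numeral_2_eq_2)
    define X where "X = real (j+1) * (c (j+1))^2 - real (j+2) * c j * c (j+2)"
    define Y where "Y = real j * c (j+1) * c j - real (j+2) * d * c (j+2)"
    define Z where "Z = real (j+1) * (c j)^2 - real (j+2) * d * c (j+1)"
    have X0: "X \<ge> 0" unfolding X_def using nw[of j] by simp
    have Z0: "Z \<ge> 0"
    proof (cases j)
      case 0
      then show ?thesis unfolding Z_def d_def by simp
    next
      case (Suc i)
      have di: "d = c i" unfolding d_def Suc by simp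
      have A: "real (j+1) * d * c (j+1) \<le> real j * (c j)^2" using nw[of i] di Suc by (simp add: algebra_simps)
      have "real (j+1) * (real (j+2) * d * c (j+1)) = real (j+2) * (real (j+1) * d * c (j+1))" by simp
      also have "\<dots> \<le> real (j+2) * (real j * (c j)^2)" using A by (intro mult_left_mono) auto
      also have "\<dots> \<le> real (j+1) * (real (j+1) * (c j)^2)"
      proof -
        have "real (j+2) * real j \<le> real (j+1) * real (j+1)" by (simp add: algebra_simps)
        then have "(real (j+2) * real j) * (c j)^2 \<le> (real (j+1) * real (j+1)) * (c j)^2"
          by (intro mult_right_mono) auto
        then show ?thesis by (simp add: algebra_simps)
      qed
      finally have "real (j+2) * d * c (j+1) \<le> real (j+1) * (c j)^2"
        by (simp add: mult_le_cancel_left_pos)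
      then show ?thesis unfolding Z_def by simp
    qed
    have Y0: "Y \<ge> 0"
    proof (cases j)
      case 0
      then show ?thesis unfolding Y_def d_def by simp
    next
      case (Suc i)
      have di: "d = c i" unfolding d_def Suc by simp
      show ?thesis
      proof (cases "c j = 0 \<or> c (j+1) = 0")
        case True
        then have "c (j+1) = 0" using zp by auto
        then have "c (j+2) = 0" using zp[of "j+1"] by (simp add: numeral_2_eq_2)
        then show ?thesis unfolding Y_def using nn by simp
      next
        case False
        then have pj: "c j > 0" and pj1: "c (j+1) > 0" using nn[of j] nn[of "j+1"] by auto
        have A: "real (j+1) * d * c (j+1) \<le> real j * (c j)^2" using nw[of i] di Suc by (simp add: algebra_simps)
        have B: "real (j+2) * c j * c (j+2) \<le> real (j+1) * (c (j+1))^2" using nw[of j] by simp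
        have "(real (j+1) * d * c (j+1)) * (real (j+2) * c j * c (j+2)) \<le> (real j * (c j)^2) * (real (j+1) * (c (j+1))^2)"
          by (rule mult_mono[OF A B]) (use nn in auto)
        then have "(real (j+1) * c j * c (j+1)) * (real (j+2) * d * c (j+2)) \<le> (real (j+1) * c j * c (j+1)) * (real j * c (j+1) * c j)"
          by (simp add: algebra_simps power2_eq_square)
        moreover have "real (j+1) * c j * c (j+1) > 0" using pj pj1 by simp
        ultimately have "real (j+2) * d * c (j+2) \<le> real j * c (j+1) * c j"
          by (rule mult_left_le_imp_le)
        then show ?thesis unfolding Y_def by simp
      qed
    qed
    have id: "real (j+1) * (c' (j+1))^2 - real (j+2) * c' j * c' (j+2) = \<rho>^2 * X + \<rho> * Y + Z"
      unfolding e0 e1 e2 X_def Y_def Z_def by (simp add: algebra_simps power2_eq_square)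
    have "\<rho>^2 * X + \<rho> * Y + Z \<ge> 0" using X0 Y0 Z0 rho by (intro add_nonneg_nonneg mult_nonneg_nonneg) auto
    then show "real (j+2) * c' j * c' (j+2) \<le> real (j+1) * (c' (j+1))^2" using id by simp
  qed
  show ?thesis unfolding NWP_def using nn' zp' nw' by blast
qed

lemma coeff_lin_mult: "coeff ([:a, 1:] * q) k = (a::real) * coeff q k + (case k of 0 \<Rightarrow> 0 | Suc i \<Rightarrow> coeff q i)"
  by (simp add: coeff_pCons split: nat.splits)

lemma NWP_prod: "\<forall>\<rho>\<in>set rs. \<rho> > 0 \<Longrightarrow> NWP (coeff (\<Prod>\<rho>\<leftarrow>rs. [:\<rho>, 1:]))"
proof (induction rs)
  case Nil
  have "\<And>k. coeff (1::real poly) k = (if k = 0 then 1 else 0)" by (simp add: coeff_1)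
  then show ?case unfolding NWP_def by (auto simp: numeral_2_eq_2)
next
  case (Cons \<rho> rs)
  define Q where "Q = (\<Prod>\<rho>\<leftarrow>rs. [:\<rho>, 1:])"
  have N: "NWP (coeff Q)" using Cons unfolding Q_def by simp
  have eq: "\<And>k. coeff (\<Prod>\<rho>\<leftarrow>(\<rho>#rs). [:\<rho>, 1:]) k = \<rho> * coeff Q k + (case k of 0 \<Rightarrow> 0 | Suc i \<Rightarrow> coeff Q i)"
    unfolding Q_def by (simp only: list.map(2) prod_list.Cons coeff_lin_mult)
  show ?case using nw_step[OF N _ eq] Cons.prems by simp
qed

lemma prod_root: "r \<in> set rs \<Longrightarrow> poly (\<Prod>x\<leftarrow>rs. [:-x, 1:]) r = (0::real)"
  by (induction rs) auto

lemma newton_fpoly: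
  fixes d :: nat and f :: "nat \<Rightarrow> nat"
  assumes real_roots: "\<forall>z::complex. poly (map_poly complex_of_real (fpoly d f)) z = 0 \<longrightarrow> z \<in> \<real>"
  shows "\<forall>j. real (j+2) * coeff (fpoly d f) j * coeff (fpoly d f) (j+2) \<le> real (j+1) * (coeff (fpoly d f) (j+1))^2"
proof -
  have p0: "fpoly d f \<noteq> 0"
  proof
    assume "fpoly d f = 0"
    then have "coeff (fpoly d f) 0 = 0" by simp
    then show False using coeff_fpoly[of d f 0] by simp
  qed
  obtain c rs where crs: "c \<noteq> 0" "fpoly d f = smult c (\<Prod>r\<leftarrow>rs. [:-r, 1:])"
    using real_roots_factor[OF p0] real_roots by blast
  have neg: "\<forall>r\<in>set rs. r < 0"
  proof
    fix r assume r: "r \<in> set rs"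
    have "poly (\<Prod>r\<leftarrow>rs. [:-r, 1:]) r = 0" using r by (rule prod_root)
    then have "poly (fpoly d f) r = 0" using crs by simp
    then show "r < 0" using poly_fpoly_pos[of r d f] by (cases "r \<ge> 0") auto
  qed
  define rhos where "rhos = map uminus rs"
  have pos: "\<forall>\<rho>\<in>set rhos. \<rho> > 0" unfolding rhos_def using neg by auto
  have eqp: "(\<Prod>r\<leftarrow>rs. [:-r, 1:]) = (\<Prod>\<rho>\<leftarrow>rhos. [:\<rho>, 1:])" unfolding rhos_def
    by (simp add: comp_def)
  have N: "NWP (coeff (\<Prod>\<rho>\<leftarrow>rhos. [:\<rho>, 1:]))" using NWP_prod pos by blast
  show ?thesis
  proof
    fix j
    let ?q = "coeff (\<Prod>\<rho>\<leftarrow>rhos. [:\<rho>, 1:])"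
    have "real (j+2) * ?q j * ?q (j+2) \<le> real (j+1) * (?q (j+1))^2" using N unfolding NWP_def by blast
    then have "c^2 * (real (j+2) * ?q j * ?q (j+2)) \<le> c^2 * (real (j+1) * (?q (j+1))^2)"
      by (intro mult_left_mono) auto
    then show "real (j+2) * coeff (fpoly d f) j * coeff (fpoly d f) (j+2) \<le> real (j+1) * (coeff (fpoly d f) (j+1))^2"
      unfolding crs(2) eqp by (simp add: algebra_simps power2_eq_square)
  qed
qed


theorem corollary3p2:
  fixes d :: nat and f :: "nat \<Rightarrow> nat"
  assumes pos: "\<forall>i<d. f i > 0"
    and real_roots: "\<forall>z::complex. poly (map_poly complex_of_real (fpoly d f)) z = 0 \<longrightarrow> z \<in> \<real>"
  shows "\<forall>i<d. kappa (i + 1) (f i) \<le> (if i = 0 then 1 else f (i - 1))"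
proof -
  define a where "a k = (if k = 0 then 1 else f (k-1))" for k
  have a0: "a 0 = 1" unfolding a_def by simp
  have apos: "\<forall>k\<le>d. 1 \<le> a k"
  proof (intro allI impI)
    fix k assume "k \<le> d"
    then show "1 \<le> a k"
    proof (cases k)
      case 0
      then show ?thesis unfolding a_def by simp
    next
      case (Suc n)
      then have "n < d" using \<open>k \<le> d\<close> by simp
      then have "f n > 0" using pos by blast
      then show ?thesis unfolding a_def using Suc by simp
    qed
  qed
  have ca: "\<And>k. k \<le> d \<Longrightarrow> coeff (fpoly d f) k = real (a k)"
    unfolding a_def by (simp add: coeff_fpoly)
  have nwr: "\<forall>j. real (j+2) * coeff (fpoly d f) j * coeff (fpoly d f) (j+2) \<le> real (j+1) * (coeff (fpoly d f) (j+1))^2"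
    using newton_fpoly[OF real_roots] .
  have nw: "\<forall>k. 2 \<le> k \<longrightarrow> k \<le> d \<longrightarrow> k * a (k-2) * a k \<le> (k-1) * (a (k-1))^2"
  proof (intro allI impI)
    fix k assume k2: "2 \<le> k" and kd: "k \<le> d"
    obtain j where j: "k = j + 2" using k2 by (metis add.commute le_Suc_ex)
    have "real (j+2) * coeff (fpoly d f) j * coeff (fpoly d f) (j+2) \<le> real (j+1) * (coeff (fpoly d f) (j+1))^2"
      using nwr by blast
    moreover have "coeff (fpoly d f) j = real (a j)" "coeff (fpoly d f) (j+1) = real (a (j+1))"
      "coeff (fpoly d f) (j+2) = real (a (j+2))" using ca kd j by auto
    ultimately have "real (j+2) * real (a j) * real (a (j+2)) \<le> real (j+1) * (real (a (j+1)))^2" by simp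
    then have "(j+2) * a j * a (j+2) \<le> (j+1) * (a (j+1))^2"
      by (metis of_nat_le_iff of_nat_mult of_nat_power)
    then show "k * a (k-2) * a k \<le> (k-1) * (a (k-1))^2" using j by simp
  qed
  have mac: "\<forall>k. 1 \<le> k \<longrightarrow> k \<le> d \<longrightarrow> kappa k (a k) \<le> a (k-1)"
    using macaulay_seq[of a d] a0 apos nw by blast
  show ?thesis
  proof (intro allI impI)
    fix i assume i: "i < d"
    have "1 \<le> i+1" "i+1 \<le> d" using i by auto
    then have "kappa (i+1) (a (i+1)) \<le> a (i+1-1)" using mac by blast
    moreover have "a (i+1) = f i" unfolding a_def by simp
    moreover have "a (i+1-1) = (if i = 0 then 1 else f (i - 1))" unfolding a_def by simp
    ultimately show "kappa (i + 1) (f i) \<le> (if i = 0 then 1 else f (i - 1))" by simp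
  qed
qed

end
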